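(* Let $\Delta\ge 4$ be an integer, put $t=\left\lfloor\frac{\Delta+3}{2}\right\rfloor$, and for positive integers $i,j$ define \[ F(i,j)=(4\Delta-6)\Bigl(\frac{1}{i}+\frac{1}{j}\Bigr)+\Delta^2-6\Delta+3+\frac{6}{\Delta}-(i-j)^2 . \] Then for all integers $1\le p\le q\le t$ we have $F(p,q)\ge F(3,\Delta)$. *)

theory Defs
  imports Complex_Main
begin

definition F :: "int \<Rightarrow> int \<Rightarrow> int \<Rightarrow> real" where
  "F \<Delta> i j = (4 * of_int \<Delta> - 6) * (1 / of_int i + 1 / of_int j)
     + (of_int \<Delta>)\<^sup>2 - 6 * of_int \<Delta> + 3 + 6 / of_int \<Delta> - (of_int i - of_int j)\<^sup>2"

end

theory Submission
  imports Defs
begin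

lemma big_case:
  fixes x :: real
  assumes "x \<ge> 8"
  shows "4*(4*x-6)/(x+3) - (x+1)^2/4 \<ge> (4*x-6)*(1/3+1/x) - (x-3)^2"
proof -
  have h: "4*(4*x-6)/(x+3) - (x+1)^2/4 - ((4*x-6)*(1/3+1/x) - (x-3)^2)
     = (9*x^4 - 67*x^3 - 9*x^2 + 27*x + 216) / (12*x*(x+3))"
    using assms by (simp add: field_simps) (simp add: algebra_simps power2_eq_square power3_eq_cube power4_eq_xxxx)
  have "9*x^4 - 67*x^3 - 9*x^2 + 27*x + 216 \<ge> 0"
  proof -
    have "x^2*(9*x^2 - 67*x - 9) \<ge> 0"
    proof -
      have "9*x^2 - 67*x - 9 = x*(9*x - 67) - 9" by (simp add: algebra_simps power2_eq_square)
      also have "x*(9*x-67) \<ge> 8*5" using assms by (intro mult_mono) auto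
      ultimately show ?thesis by simp
    qed
    moreover have "x^2*(9*x^2 - 67*x - 9) = 9*x^4 - 67*x^3 - 9*x^2"
      by (simp add: algebra_simps power2_eq_square power3_eq_cube power4_eq_xxxx)
    ultimately show ?thesis using assms by linarith
  qed
  then have "(9*x^4 - 67*x^3 - 9*x^2 + 27*x + 216) / (12*x*(x+3)) \<ge> 0"
    using assms by simp
  then show ?thesis using h by linarith
qed

theorem lemma4p5:
  fixes \<Delta> p q :: int
  assumes "\<Delta> \<ge> 4"
    and "1 \<le> p" and "p \<le> q" and "q \<le> \<lfloor>(of_int \<Delta> + 3) / (2::real)\<rfloor>"
  shows "F \<Delta> p q \<ge> F \<Delta> 3 \<Delta>"
proof -
  have "real_of_int q \<le> (of_int \<Delta> + 3) / 2" using assms(4) le_floor_iff by blast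
  then have "real_of_int (2 * q) \<le> real_of_int (\<Delta> + 3)" by simp
  then have qD: "2 * q \<le> \<Delta> + 3" by linarith
  show ?thesis
  proof (cases "\<Delta> \<ge> 8")
    case True
    define x where "x = real_of_int \<Delta>"
    have x8: "x \<ge> 8" using True x_def by simp
    have qr: "2 * real_of_int q \<le> x + 3" using qD x_def by linarith
    have p1: "real_of_int p \<ge> 1" "real_of_int p \<le> real_of_int q" using assms by auto
    have s1: "1 / real_of_int p + 1 / real_of_int q \<ge> 4 / (x+3)"
    proof -
      have "1 / real_of_int q \<ge> 2 / (x+3)" using qr p1 x8
        by (simp add: field_simps)
      moreover have "1 / real_of_int p \<ge> 1 / real_of_int q" using p1
        by (simp add: frac_le)
      ultimately show ?thesis by simp
    qed
    have s2: "(real_of_int p - real_of_int q)^2 \<le> (x+1)^2/4"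
    proof -
      have "\<bar>real_of_int p - real_of_int q\<bar> \<le> (x+1)/2" using p1 qr by simp
      then have "\<bar>real_of_int p - real_of_int q\<bar>^2 \<le> ((x+1)/2)^2"
        by (intro power_mono) auto
      then show ?thesis by (simp add: power_divide)
    qed
    have a: "4*x - 6 \<ge> 0" using x8 by simp
    have "(4*x-6)*(1 / real_of_int p + 1 / real_of_int q) \<ge> (4*x-6)*(4/(x+3))"
      using s1 a by (intro mult_left_mono) auto
    then have "F \<Delta> p q \<ge> 4*(4*x-6)/(x+3) - (x+1)^2/4 + x^2 - 6*x + 3 + 6/x"
      unfolding F_def x_def[symmetric] using s2 by simp
    moreover have "F \<Delta> 3 \<Delta> = (4*x-6)*(1/3+1/x) - (x-3)^2 + x^2 - 6*x + 3 + 6/x"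
      unfolding F_def x_def[symmetric] by (simp add: power2_commute)
    ultimately show ?thesis using big_case[OF x8] by linarith
  next
    case False
    then have "\<Delta> = 4 \<or> \<Delta> = 5 \<or> \<Delta> = 6 \<or> \<Delta> = 7" using assms(1) by auto
    moreover have "q \<le> 5" using qD False by auto
    then have "q \<in> {1..5}" "p \<in> {1..5}" using assms by auto
    then have "(q = 1 \<or> q = 2 \<or> q = 3 \<or> q = 4 \<or> q = 5) \<and> (p = 1 \<or> p = 2 \<or> p = 3 \<or> p = 4 \<or> p = 5)"
      by auto
    ultimately show ?thesis using qD assms(3)
      by (elim disjE conjE) (simp_all add: F_def)
  qed
qed

end
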